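(* Let $H$, $F$ be fixed graphs. (i) If $\chi(H)<\chi(F)$ and $n$ is sufficiently large, then $\mathrm{ex}(n,H,F)>\mathrm{ex}(n-1,H,F)$. (ii) If $\chi(\mathcal H^*(H))<\chi(\mathcal H(F))$ and $n$ is sufficiently large, then $\mathrm{ex}(n,\mathcal H(H),\mathcal H(F))>\mathrm{ex}(n-1,\mathcal H(H),\mathcal H(F))$.
   Context: All graphs are finite and simple; $\chi$ denotes chromatic number, and for a family $\mathcal X$ of graphs $\chi(\mathcal X)$ is the smallest chromatic number of a member of $\mathcal X$. $\alpha(X)$ is the independence number of $X$. $\mathcal H(X)$ is the family of graphs obtained from $X$ by deleting an independent set of vertices, and $\mathcal H^*(X)$ is the family of graphs obtained from $X$ by deleting an independent set of order $\alpha(X)$. $\mathrm{ex}(n,H,F)$ is the maximum number of copies of $H$ (subgraphs isomorphic to $H$) in an $n$-vertex graph not containing $F$ as a subgraph; for families $\mathcal H,\mathcal F$, $\mathrm{ex}(n,\mathcal H,\mathcal F)$ is the maximum, over $n$-vertex graphs containing no member of $\mathcal F$ as a subgraph, of the total number of copies of members of $\mathcal H$. *)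

theory Defs
  imports Main "HOL-Library.Extended_Nat"
begin

text \<open>A graph is a pair (vertex set, edge set); edges are 2-element vertex sets.\<close>
type_synonym 'a sgraph = "'a set \<times> 'a set set"

abbreviation verts :: "'a sgraph \<Rightarrow> 'a set" where "verts G \<equiv> fst G"
abbreviation edges :: "'a sgraph \<Rightarrow> 'a set set" where "edges G \<equiv> snd G"

definition sgraph_wf :: "'a sgraph \<Rightarrow> bool" where
  "sgraph_wf G \<longleftrightarrow> finite (verts G) \<and>
     (\<forall>e\<in>edges G. \<exists>u v. u \<noteq> v \<and> u \<in> verts G \<and> v \<in> verts G \<and> e = {u, v})"

definition graph :: "'a sgraph \<Rightarrow> bool" where
  "graph G \<longleftrightarrow> sgraph_wf G \<and> verts G \<noteq> {}"

definition chi :: "'a sgraph \<Rightarrow> nat" where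
  "chi G = (LEAST k. \<exists>c :: 'a \<Rightarrow> nat. (\<forall>v\<in>verts G. c v < k) \<and>
                 (\<forall>u v. {u, v} \<in> edges G \<longrightarrow> c u \<noteq> c v))"

definition indep :: "'a sgraph \<Rightarrow> 'a set \<Rightarrow> bool" where
  "indep G I \<longleftrightarrow> I \<subseteq> verts G \<and> (\<forall>e\<in>edges G. \<not> e \<subseteq> I)"

definition alpha :: "'a sgraph \<Rightarrow> nat" where
  "alpha G = Max {card I | I. indep G I}"

definition delete_set :: "'a sgraph \<Rightarrow> 'a set \<Rightarrow> 'a sgraph" where
  "delete_set G I = (verts G - I, {e \<in> edges G. e \<inter> I = {}})"

text \<open>\<open>\<H>(X)\<close>: graphs obtained from X by deleting an independent set (the result must be a graph,
  i.e. have a nonempty vertex set).\<close>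
definition Hfam :: "'a sgraph \<Rightarrow> 'a sgraph set" where
  "Hfam X = {delete_set X I | I. indep X I \<and> I \<noteq> verts X}"

definition Hstar :: "'a sgraph \<Rightarrow> 'a sgraph set" where
  "Hstar X = {delete_set X I | I. indep X I \<and> card I = alpha X \<and> I \<noteq> verts X}"

text \<open>Smallest chromatic number of a member of the family (infinity for the empty family).\<close>
definition chi_fam :: "'a sgraph set \<Rightarrow> enat" where
  "chi_fam A = (INF G\<in>A. enat (chi G))"

definition subgraph :: "'a sgraph \<Rightarrow> 'a sgraph \<Rightarrow> bool" where
  "subgraph S G \<longleftrightarrow> verts S \<subseteq> verts G \<and> edges S \<subseteq> edges G \<and> (\<forall>e\<in>edges S. e \<subseteq> verts S)"

definition iso :: "'a sgraph \<Rightarrow> 'b sgraph \<Rightarrow> bool" where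
  "iso G G' \<longleftrightarrow> (\<exists>f. bij_betw f (verts G) (verts G') \<and> (\<lambda>e. f ` e) ` edges G = edges G')"

definition copies :: "'a sgraph set \<Rightarrow> 'b sgraph \<Rightarrow> 'b sgraph set" where
  "copies A G = {S. subgraph S G \<and> (\<exists>X\<in>A. iso X S)}"

definition contains :: "'b sgraph \<Rightarrow> 'a sgraph set \<Rightarrow> bool" where
  "contains G A \<longleftrightarrow> copies A G \<noteq> {}"

definition ex :: "nat \<Rightarrow> 'a sgraph set \<Rightarrow> 'b sgraph set \<Rightarrow> nat" where
  "ex n A B = Max {card (copies A G) | G :: nat sgraph.
       verts G = {0..<n} \<and> sgraph_wf G \<and> \<not> contains G B}"

end

theory Submission
  imports Defs "HOL-Library.FuncSet"
begin

definition img :: "('a \<Rightarrow> 'b) \<Rightarrow> 'a sgraph \<Rightarrow> 'b sgraph" where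
  "img g X = (g ` verts X, (\<lambda>e. g ` e) ` edges X)"

definition emb :: "'a sgraph \<Rightarrow> 'b sgraph \<Rightarrow> ('a \<Rightarrow> 'b) set" where
  "emb X G = {g \<in> verts X \<rightarrow>\<^sub>E verts G. inj_on g (verts X) \<and> (\<forall>e\<in>edges X. g ` e \<in> edges G)}"

definition nbr :: "'a sgraph \<Rightarrow> 'a \<Rightarrow> 'a set" where
  "nbr X a = {x. {a, x} \<in> edges X}"

definition CN :: "'b sgraph \<Rightarrow> 'b set \<Rightarrow> 'b set" where
  "CN G S = {w \<in> verts G. \<forall>s\<in>S. {w, s} \<in> edges G}"

definition good :: "'a sgraph set \<Rightarrow> nat \<Rightarrow> 'b sgraph \<Rightarrow> bool" where
  "good XX f G \<longleftrightarrow> (\<exists>X\<in>XX. \<exists>a\<in>verts X. \<exists>\<psi>\<in>emb (delete_set X {a}) G.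
       card (CN G (\<psi> ` nbr X a)) \<ge> f)"

lemma wf_edge: "sgraph_wf G \<Longrightarrow> e \<in> edges G \<Longrightarrow> \<exists>u v. u \<noteq> v \<and> u \<in> verts G \<and> v \<in> verts G \<and> e = {u, v}"
  unfolding sgraph_wf_def by blast

lemma wf_edge_sub: "sgraph_wf G \<Longrightarrow> e \<in> edges G \<Longrightarrow> e \<subseteq> verts G"
  using wf_edge by fastforce

lemma wf_edges_finite: "sgraph_wf G \<Longrightarrow> finite (edges G)"
proof -
  assume w: "sgraph_wf G"
  have "edges G \<subseteq> Pow (verts G)" using wf_edge_sub[OF w] by blast
  moreover have "finite (verts G)" using w unfolding sgraph_wf_def by simp
  ultimately show ?thesis using finite_subset by blast
qed

lemma copies_finite:
  assumes "sgraph_wf G" shows "finite (copies A G)"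
proof -
  have "copies A G \<subseteq> Pow (verts G) \<times> Pow (edges G)"
    unfolding copies_def subgraph_def by auto
  moreover have "finite (Pow (verts G) \<times> Pow (edges G))"
    using assms wf_edges_finite[OF assms] unfolding sgraph_wf_def by auto
  ultimately show ?thesis by (rule finite_subset)
qed

lemma delete_set_wf: "sgraph_wf X \<Longrightarrow> sgraph_wf (delete_set X I)"
proof -
  assume w: "sgraph_wf X"
  show ?thesis unfolding sgraph_wf_def delete_set_def fst_conv snd_conv
  proof (intro conjI ballI)
    show "finite (verts X - I)" using w unfolding sgraph_wf_def by simp
    fix e assume "e \<in> {e \<in> edges X. e \<inter> I = {}}"
    then have e: "e \<in> edges X" "e \<inter> I = {}" by auto
    then obtain u v where "u \<noteq> v" "u \<in> verts X" "v \<in> verts X" "e = {u, v}" using wf_edge[OF w] by blast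
    with e(2) show "\<exists>u v. u \<noteq> v \<and> u \<in> verts X - I \<and> v \<in> verts X - I \<and> e = {u, v}" by blast
  qed
qed

lemma copies_single_sub:
  assumes "sgraph_wf X"
  shows "copies {X} G \<subseteq> (\<lambda>g. img g X) ` emb X G"
proof
  fix S assume "S \<in> copies {X} G"
  then have sub: "subgraph S G" and "iso X S" unfolding copies_def by auto
  then obtain g where bij: "bij_betw g (verts X) (verts S)" and ed: "(\<lambda>e. g ` e) ` edges X = edges S"
    unfolding iso_def by blast
  define \<phi> where "\<phi> = restrict g (verts X)"
  have eq: "\<And>e. e \<in> edges X \<Longrightarrow> \<phi> ` e = g ` e"
  proof -
    fix e assume "e \<in> edges X"
    then have "e \<subseteq> verts X" using wf_edge_sub[OF assms] by blast
    then show "\<phi> ` e = g ` e" unfolding \<phi>_def by auto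
  qed
  have "\<phi> \<in> emb X G"
    unfolding emb_def
  proof (intro CollectI conjI ballI)
    show "\<phi> \<in> verts X \<rightarrow>\<^sub>E verts G" using bij sub unfolding \<phi>_def bij_betw_def subgraph_def by auto
    show "inj_on \<phi> (verts X)" using bij unfolding \<phi>_def bij_betw_def by (simp add: inj_on_def)
    fix e assume "e \<in> edges X"
    then show "\<phi> ` e \<in> edges G" using eq ed sub unfolding subgraph_def by auto
  qed
  moreover have "S = img \<phi> X"
  proof -
    have "\<phi> ` verts X = verts S" using bij unfolding \<phi>_def bij_betw_def by simp
    moreover have "(\<lambda>e. \<phi> ` e) ` edges X = edges S" using eq ed image_cong[OF refl eq] by simp
    ultimately show ?thesis unfolding img_def by (simp add: prod_eq_iff)
  qed
  ultimately show "S \<in> (\<lambda>g. img g X) ` emb X G" by blast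
qed

lemma emb_finite: "finite (verts X) \<Longrightarrow> finite (verts G) \<Longrightarrow> finite (emb X G)"
proof -
  assume "finite (verts X)" "finite (verts G)"
  then have "finite (verts X \<rightarrow>\<^sub>E verts G)" by (simp add: finite_PiE)
  moreover have "emb X G \<subseteq> verts X \<rightarrow>\<^sub>E verts G" unfolding emb_def by blast
  ultimately show ?thesis by (rule finite_subset[rotated])
qed

lemma card_copies_single:
  assumes "sgraph_wf X" "sgraph_wf G"
  shows "card (copies {X} G) \<le> card (emb X G)"
proof -
  have "finite (emb X G)" using assms emb_finite unfolding sgraph_wf_def by blast
  have "card (copies {X} G) \<le> card ((\<lambda>g. img g X) ` emb X G)"
    by (rule card_mono) (use copies_single_sub[OF assms(1), of G] \<open>finite (emb X G)\<close> in auto)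
  also have "\<dots> \<le> card (emb X G)" by (rule card_image_le) fact
  finally show ?thesis .
qed

lemma copies_Union: "copies XX G = (\<Union>X\<in>XX. copies {X} G)"
  unfolding copies_def by auto

lemma card_copies_le:
  assumes "finite XX" "\<forall>X\<in>XX. sgraph_wf X" "sgraph_wf G"
  shows "card (copies XX G) \<le> (\<Sum>X\<in>XX. card (emb X G))"
proof -
  have "card (copies XX G) \<le> (\<Sum>X\<in>XX. card (copies {X} G))"
    by (subst copies_Union) (rule card_UN_le[OF assms(1)])
  also have "\<dots> \<le> (\<Sum>X\<in>XX. card (emb X G))"
    using assms(2,3) by (intro sum_mono card_copies_single) auto
  finally show ?thesis .
qed

lemma nbr_sub: "sgraph_wf X \<Longrightarrow> nbr X t \<subseteq> verts X - {t}"
  unfolding nbr_def using wf_edge by (fastforce simp: doubleton_eq_iff)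

lemma restrict_emb:
  assumes "\<phi> \<in> emb X G"
  shows "restrict \<phi> (verts X - T) \<in> emb (delete_set X T) G"
  unfolding emb_def delete_set_def fst_conv snd_conv
proof (intro CollectI conjI ballI)
  show "restrict \<phi> (verts X - T) \<in> verts X - T \<rightarrow>\<^sub>E verts G"
    using assms unfolding emb_def by auto
  show "inj_on (restrict \<phi> (verts X - T)) (verts X - T)"
    using assms unfolding emb_def inj_on_def by auto
  fix e assume "e \<in> {e \<in> edges X. e \<inter> T = {}}"
  then have e: "e \<in> edges X" "e \<inter> T = {}" by auto
  have "restrict \<phi> (verts X - T) ` e = \<phi> ` e"
  proof (rule image_cong[OF refl])
    fix x assume "x \<in> e"
    show "restrict \<phi> (verts X - T) x = \<phi> x"
    proof (cases "x \<in> verts X")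
      case True then show ?thesis using e \<open>x \<in> e\<close> by auto
    next
      case False
      then have "\<phi> x = undefined" using assms unfolding emb_def PiE_def extensional_def by auto
      then show ?thesis using False by simp
    qed
  qed
  then show "restrict \<phi> (verts X - T) ` e \<in> edges G" using assms e unfolding emb_def by auto
qed

lemma emb_bound:
  fixes X :: "'a sgraph" and G :: "'b sgraph"
  assumes wX: "sgraph_wf X" and wG: "sgraph_wf G" and T: "indep X T"
    and bad: "\<forall>t\<in>T. \<forall>\<psi>\<in>emb (delete_set X {t}) G. card (CN G (\<psi> ` nbr X t)) < f"
  shows "card (emb X G) \<le> f ^ card T * card (emb (delete_set X T) G)"
proof -
  have TV: "T \<subseteq> verts X" using T unfolding indep_def by auto
  have finX: "finite (verts X)" using wX unfolding sgraph_wf_def by auto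
  have finG: "finite (verts G)" using wG unfolding sgraph_wf_def by auto
  have finT: "finite T" using TV finX finite_subset by blast
  have nbrT: "\<And>t. t \<in> T \<Longrightarrow> nbr X t \<inter> T = {}"
  proof -
    fix t assume t: "t \<in> T"
    show "nbr X t \<inter> T = {}"
    proof (rule ccontr)
      assume "nbr X t \<inter> T \<noteq> {}"
      then obtain x where "x \<in> T" "{t, x} \<in> edges X" unfolding nbr_def by auto
      then show False using T t unfolding indep_def by auto
    qed
  qed
  define r where "r = (\<lambda>\<phi>::'a \<Rightarrow> 'b. restrict \<phi> (verts X - T))"
  define Fi where "Fi = (\<lambda>\<psi>. {\<phi> \<in> emb X G. r \<phi> = \<psi>})"
  have finE: "finite (emb (delete_set X T) G)"
    by (rule emb_finite) (use finX finG in \<open>auto simp: delete_set_def\<close>)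
  have cover: "emb X G = (\<Union>\<psi>\<in>emb (delete_set X T) G. Fi \<psi>)"
    unfolding Fi_def r_def using restrict_emb by blast
  have fib: "card (Fi \<psi>) \<le> f ^ card T" for \<psi>
  proof (cases "Fi \<psi> = {}")
    case True then show ?thesis by simp
  next
    case False
    then obtain \<phi>0 where p0: "\<phi>0 \<in> emb X G" "r \<phi>0 = \<psi>" unfolding Fi_def by auto
    define C where "C = (\<lambda>t. CN G (\<phi>0 ` nbr X t))"
    have Cf: "card (C t) < f" if t: "t \<in> T" for t
    proof -
      have "restrict \<phi>0 (verts X - {t}) \<in> emb (delete_set X {t}) G"
        by (rule restrict_emb[OF p0(1)])
      moreover have "restrict \<phi>0 (verts X - {t}) ` nbr X t = \<phi>0 ` nbr X t"
        using nbr_sub[OF wX, of t] by (intro image_cong) auto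
      ultimately show ?thesis using bad t unfolding C_def by metis
    qed
    have inj: "inj_on (\<lambda>\<phi>. restrict \<phi> T) (Fi \<psi>)"
    proof (rule inj_onI)
      fix \<phi>1 \<phi>2 assume a: "\<phi>1 \<in> Fi \<psi>" "\<phi>2 \<in> Fi \<psi>" "restrict \<phi>1 T = restrict \<phi>2 T"
      show "\<phi>1 = \<phi>2"
      proof
        fix x
        show "\<phi>1 x = \<phi>2 x"
        proof (cases "x \<in> verts X")
          case False
          then show ?thesis using a unfolding Fi_def emb_def PiE_def extensional_def by auto
        next
          case True
          show ?thesis
          proof (cases "x \<in> T")
            case True then show ?thesis using a(3) by (metis restrict_apply')
          next
            case False
            with \<open>x \<in> verts X\<close> have "r \<phi>1 x = \<phi>1 x" "r \<phi>2 x = \<phi>2 x" unfolding r_def by auto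
            then show ?thesis using a unfolding Fi_def by auto
          qed
        qed
      qed
    qed
    have into: "(\<lambda>\<phi>. restrict \<phi> T) ` Fi \<psi> \<subseteq> (\<Pi>\<^sub>E t\<in>T. C t)"
    proof
      fix g assume "g \<in> (\<lambda>\<phi>. restrict \<phi> T) ` Fi \<psi>"
      then obtain \<phi> where ph: "\<phi> \<in> Fi \<psi>" "g = restrict \<phi> T" by auto
      have phE: "\<phi> \<in> emb X G" and rr: "r \<phi> = r \<phi>0" using ph p0 unfolding Fi_def by auto
      have "\<phi> t \<in> C t" if t: "t \<in> T" for t
        unfolding C_def CN_def
      proof (intro CollectI conjI ballI)
        show "\<phi> t \<in> verts G" using phE t TV unfolding emb_def by auto
        fix s assume "s \<in> \<phi>0 ` nbr X t"
        then obtain x where x: "x \<in> nbr X t" "s = \<phi>0 x" by auto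
        have xV: "x \<in> verts X - T" using x nbr_sub[OF wX, of t] nbrT[OF t] by auto
        have "\<phi> x = \<phi>0 x"
        proof -
          have "r \<phi> x = r \<phi>0 x" using rr by simp
          then show ?thesis using xV unfolding r_def by simp
        qed
        moreover have "\<phi> ` {t, x} \<in> edges G" using phE x(1) unfolding emb_def nbr_def by auto
        ultimately show "{\<phi> t, s} \<in> edges G" using x by simp
      qed
      then show "g \<in> (\<Pi>\<^sub>E t\<in>T. C t)" using ph by auto
    qed
    have "card (Fi \<psi>) = card ((\<lambda>\<phi>. restrict \<phi> T) ` Fi \<psi>)"
      using inj by (simp add: card_image)
    also have "\<dots> \<le> card (\<Pi>\<^sub>E t\<in>T. C t)"
    proof (rule card_mono[OF _ into])
      show "finite (\<Pi>\<^sub>E t\<in>T. C t)"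
        using finT finG by (intro finite_PiE) (auto simp: C_def CN_def)
    qed
    also have "\<dots> = (\<Prod>t\<in>T. card (C t))" using finT by (rule card_PiE)
    also have "\<dots> \<le> (\<Prod>t\<in>T. f)" using Cf by (intro prod_mono) (auto simp: less_imp_le)
    also have "\<dots> = f ^ card T" by simp
    finally show ?thesis .
  qed
  have "card (emb X G) \<le> (\<Sum>\<psi>\<in>emb (delete_set X T) G. card (Fi \<psi>))"
    by (subst cover) (rule card_UN_le[OF finE])
  also have "\<dots> \<le> (\<Sum>\<psi>\<in>emb (delete_set X T) G. f ^ card T)"
    by (intro sum_mono fib)
  also have "\<dots> = f ^ card T * card (emb (delete_set X T) G)" by simp
  finally show ?thesis .
qed

lemma card_emb_le:
  assumes "finite (verts X)" "finite (verts G)"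
  shows "card (emb X G) \<le> card (verts G) ^ card (verts X)"
proof -
  have "card (emb X G) \<le> card (verts X \<rightarrow>\<^sub>E verts G)"
  proof (rule card_mono)
    show "finite (verts X \<rightarrow>\<^sub>E verts G)" using assms by (simp add: finite_PiE)
    show "emb X G \<subseteq> verts X \<rightarrow>\<^sub>E verts G" unfolding emb_def by blast
  qed
  also have "\<dots> = card (verts G) ^ card (verts X)" using assms by (simp add: card_funcsetE)
  finally show ?thesis .
qed

lemma iso_img0: "inj_on g (verts X) \<Longrightarrow> iso X (img g X)"
  unfolding iso_def img_def by (auto intro!: exI[of _ g] simp: bij_betw_def)

lemma iso_img:
  assumes "iso F S" "inj_on \<sigma> (verts S)"
  shows "iso F (img \<sigma> S)"
proof -
  obtain g where g: "bij_betw g (verts F) (verts S)" "(\<lambda>e. g ` e) ` edges F = edges S"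
    using assms(1) unfolding iso_def by blast
  have "bij_betw (\<sigma> \<circ> g) (verts F) (\<sigma> ` verts S)"
    using g(1) assms(2) by (meson bij_betw_trans inj_on_imp_bij_betw)
  moreover have "(\<lambda>e. (\<sigma> \<circ> g) ` e) ` edges F = (\<lambda>e. \<sigma> ` e) ` edges S"
    unfolding g(2)[symmetric] image_comp by (simp add: image_comp comp_def)
  ultimately show ?thesis unfolding iso_def img_def fst_conv snd_conv
    by (intro exI[of _ "\<sigma> \<circ> g"]) (simp add: comp_def)
qed

lemma copies_mono:
  assumes "verts G \<subseteq> verts G'" "edges G \<subseteq> edges G'"
  shows "copies A G \<subseteq> copies A G'"
  using assms unfolding copies_def subgraph_def by blast

lemma ext_step:
  fixes G :: "nat sgraph" and XX :: "'a sgraph set" and FF :: "'b sgraph set"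
  assumes VG: "verts G = {0..<m}" and wG: "sgraph_wf G" and free: "\<not> contains G FF"
    and fF: "\<forall>F'\<in>FF. card (verts F') \<le> f"
    and wXX: "\<forall>X\<in>XX. sgraph_wf X"
    and gd: "good XX f G"
  shows "\<exists>G'. verts G' = {0..<Suc m} \<and> sgraph_wf G' \<and> \<not> contains G' FF \<and>
           card (copies XX G') > card (copies XX G)"
proof -
  obtain X a \<psi> where X: "X \<in> XX" and a: "a \<in> verts X" and psi: "\<psi> \<in> emb (delete_set X {a}) G"
    and cnf: "card (CN G (\<psi> ` nbr X a)) \<ge> f"
    using gd unfolding good_def by blast
  define S where "S = \<psi> ` nbr X a"
  have wX: "sgraph_wf X" using X wXX by auto
  have psiV: "\<And>x. x \<in> verts X - {a} \<Longrightarrow> \<psi> x \<in> {0..<m}"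
  proof -
    fix x assume "x \<in> verts X - {a}"
    then show "\<psi> x \<in> {0..<m}" using psi VG unfolding emb_def delete_set_def by (simp add: PiE_iff)
  qed
  have SV: "S \<subseteq> {0..<m}"
  proof
    fix s assume "s \<in> S"
    then obtain x where "x \<in> nbr X a" "s = \<psi> x" unfolding S_def by auto
    then show "s \<in> {0..<m}" using nbr_sub[OF wX, of a] psiV by blast
  qed
  define G' where "G' = ({0..<Suc m}, edges G \<union> (\<lambda>s. {m, s}) ` S)"
  have EG: "\<And>e. e \<in> edges G \<Longrightarrow> e \<subseteq> {0..<m}" using wf_edge_sub[OF wG] VG by auto
  have wG': "sgraph_wf G'"
    unfolding sgraph_wf_def G'_def fst_conv snd_conv
  proof (intro conjI ballI)
    show "finite {0..<Suc m}" by simp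
    fix e assume "e \<in> edges G \<union> (\<lambda>s. {m, s}) ` S"
    then show "\<exists>u v. u \<noteq> v \<and> u \<in> {0..<Suc m} \<and> v \<in> {0..<Suc m} \<and> e = {u, v}"
    proof
      assume "e \<in> edges G"
      then obtain u v where "u \<noteq> v" "u \<in> verts G" "v \<in> verts G" "e = {u, v}" using wf_edge[OF wG] by blast
      then show ?thesis using VG by (intro exI[of _ u] exI[of _ v]) auto
    next
      assume "e \<in> (\<lambda>s. {m, s}) ` S"
      then obtain s where "s \<in> S" "e = {m, s}" by auto
      then show ?thesis using SV by (intro exI[of _ m] exI[of _ s]) auto
    qed
  qed
  have free': "\<not> contains G' FF"
  proof
    assume "contains G' FF"
    then obtain S' F' where sub: "subgraph S' G'" and F': "F' \<in> FF" and iso: "iso F' S'"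
      unfolding contains_def copies_def by blast
    have S'V: "verts S' \<subseteq> {0..<Suc m}" using sub unfolding subgraph_def G'_def by auto
    show False
    proof (cases "m \<in> verts S'")
      case False
      have "subgraph S' G"
        unfolding subgraph_def
      proof (intro conjI)
        show "verts S' \<subseteq> verts G"
        proof
          fix x assume "x \<in> verts S'"
          then have "x < Suc m" "x \<noteq> m" using S'V False by auto
          then show "x \<in> verts G" using VG by simp
        qed
        show "\<forall>e\<in>edges S'. e \<subseteq> verts S'" using sub unfolding subgraph_def by auto
        show "edges S' \<subseteq> edges G"
        proof
          fix e assume e: "e \<in> edges S'"
          then have "e \<in> edges G \<union> (\<lambda>s. {m, s}) ` S" "e \<subseteq> verts S'" using sub unfolding subgraph_def G'_def by auto
          then show "e \<in> edges G" using False by auto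
        qed
      qed
      then show False using free F' iso unfolding contains_def copies_def by blast
    next
      case True
      have finS': "finite (verts S')" using S'V finite_subset by blast
      obtain g where "bij_betw g (verts F') (verts S')" using iso unfolding iso_def by blast
      then have "card (verts S') = card (verts F')" by (rule bij_betw_same_card[symmetric])
      then have cS': "card (verts S') \<le> f" using fF F' by auto
      have "\<exists>w. w \<in> CN G S \<and> w \<notin> verts S'"
      proof (rule ccontr)
        assume "\<not> ?thesis"
        then have "CN G S \<subseteq> verts S' - {m}" using VG unfolding CN_def by auto
        then have "card (CN G S) \<le> card (verts S' - {m})" using finS' by (intro card_mono) auto
        also have "\<dots> < card (verts S')" by (rule card_Diff1_less[OF finS' True])
        finally show False using cS' cnf unfolding S_def by simp
      qed
      then obtain w where w: "w \<in> CN G S" "w \<notin> verts S'" by blast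
      have wm: "w < m" using w(1) VG unfolding CN_def by auto
      define \<sigma> where "\<sigma> = id(m := w)"
      have inj: "inj_on \<sigma> (verts S')"
        unfolding inj_on_def \<sigma>_def using w(2) by auto
      have "img \<sigma> S' \<in> copies FF G"
        unfolding copies_def
      proof (intro CollectI conjI bexI[OF _ F'])
        show "iso F' (img \<sigma> S')" by (rule iso_img[OF iso inj])
        show "subgraph (img \<sigma> S') G"
          unfolding subgraph_def img_def fst_conv snd_conv
        proof (intro conjI)
          show "\<sigma> ` verts S' \<subseteq> verts G"
          proof
          fix x assume "x \<in> \<sigma> ` verts S'"
          then obtain y where y: "y \<in> verts S'" "x = \<sigma> y" by auto
          then show "x \<in> verts G" using S'V wm VG unfolding \<sigma>_def by (cases "y = m") auto
          qed
        next
          show "\<forall>e\<in>(\<lambda>e. \<sigma> ` e) ` edges S'. e \<subseteq> \<sigma> ` verts S'"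
          proof
          fix e assume "e \<in> (\<lambda>e. \<sigma> ` e) ` edges S'"
          then obtain e0 where e0: "e0 \<in> edges S'" "e = \<sigma> ` e0" by auto
          then have "e0 \<subseteq> verts S'" using sub unfolding subgraph_def by auto
          then show "e \<subseteq> \<sigma> ` verts S'" using e0 by auto
          qed
        next
          show "(\<lambda>e. \<sigma> ` e) ` edges S' \<subseteq> edges G"
          proof
          fix e assume "e \<in> (\<lambda>e. \<sigma> ` e) ` edges S'"
          then obtain e0 where e0: "e0 \<in> edges S'" "e = \<sigma> ` e0" by auto
          then have "e0 \<in> edges G \<union> (\<lambda>s. {m, s}) ` S" using sub unfolding subgraph_def G'_def by auto
          then show "e \<in> edges G"
          proof
            assume "e0 \<in> edges G"
            then have "m \<notin> e0" using EG by fastforce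
            then have "\<sigma> ` e0 = e0" unfolding \<sigma>_def by (auto simp: image_iff)
            then show ?thesis using e0 \<open>e0 \<in> edges G\<close> by simp
          next
            assume "e0 \<in> (\<lambda>s. {m, s}) ` S"
            then obtain s where s: "s \<in> S" "e0 = {m, s}" by auto
            then have "s \<noteq> m" using SV by auto
            then have "e = {w, s}" using e0 s unfolding \<sigma>_def by auto
            then show ?thesis using w(1) s(1) unfolding CN_def by auto
          qed
          qed
        qed
      qed
      then show False using free unfolding contains_def by blast
    qed
  qed
  define \<phi> where "\<phi> = \<psi>(a := m)"
  define C where "C = img \<phi> X"
  have injphi: "inj_on \<phi> (verts X)"
  proof -
    have "inj_on \<psi> (verts X - {a})" using psi unfolding emb_def delete_set_def by auto
    show ?thesis
    proof (rule inj_onI)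
      fix x y assume xy: "x \<in> verts X" "y \<in> verts X" "\<phi> x = \<phi> y"
      show "x = y"
      proof (cases "x = a"; cases "y = a")
        assume "x = a" "y \<noteq> a"
        then have "\<psi> y < m" using psiV xy by auto
        then show ?thesis using xy \<open>x = a\<close> \<open>y \<noteq> a\<close> unfolding \<phi>_def by simp
      next
        assume "x \<noteq> a" "y = a"
        then have "\<psi> x < m" using psiV xy by auto
        then show ?thesis using xy \<open>x \<noteq> a\<close> \<open>y = a\<close> unfolding \<phi>_def by simp
      next
        assume "x \<noteq> a" "y \<noteq> a"
        then show ?thesis using xy \<open>inj_on \<psi> (verts X - {a})\<close> unfolding \<phi>_def inj_on_def by auto
      qed simp
    qed
  qed
  have "C \<in> copies XX G'"
    unfolding copies_def
  proof (intro CollectI conjI bexI[OF _ X])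
    show "iso X C" unfolding C_def by (rule iso_img0[OF injphi])
    show "subgraph C G'"
      unfolding subgraph_def C_def img_def fst_conv snd_conv
    proof (intro conjI)
      show "\<phi> ` verts X \<subseteq> verts G'"
      proof
      fix x assume "x \<in> \<phi> ` verts X"
      then obtain y where y: "y \<in> verts X" "x = \<phi> y" by auto
      then show "x \<in> verts G'" using psiV[of y] unfolding \<phi>_def G'_def by (cases "y = a") auto
      qed
    next
      show "\<forall>e\<in>(\<lambda>e. \<phi> ` e) ` edges X. e \<subseteq> \<phi> ` verts X"
      proof
      fix e assume "e \<in> (\<lambda>e. \<phi> ` e) ` edges X"
      then obtain e0 where e0: "e0 \<in> edges X" "e = \<phi> ` e0" by auto
      then have "e0 \<subseteq> verts X" using wf_edge_sub[OF wX] by auto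
      then show "e \<subseteq> \<phi> ` verts X" using e0 by auto
      qed
    next
      show "(\<lambda>e. \<phi> ` e) ` edges X \<subseteq> edges G'"
      proof
      fix e assume "e \<in> (\<lambda>e. \<phi> ` e) ` edges X"
      then obtain e0 where e0: "e0 \<in> edges X" "e = \<phi> ` e0" by auto
      show "e \<in> edges G'"
      proof (cases "a \<in> e0")
        case False
        then have "e0 \<in> edges (delete_set X {a})" using e0 unfolding delete_set_def by auto
        then have "\<psi> ` e0 \<in> edges G" using psi unfolding emb_def by auto
        moreover have "\<phi> ` e0 = \<psi> ` e0" unfolding \<phi>_def using False by (auto simp: image_iff)
        ultimately show ?thesis using e0 unfolding G'_def by auto
      next
        case True
        obtain u v where uv: "u \<noteq> v" "e0 = {u, v}" using wf_edge[OF wX e0(1)] by blast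
        obtain x where x: "e0 = {a, x}" "x \<noteq> a" using uv True by auto
        then have "x \<in> nbr X a" using e0 unfolding nbr_def by auto
        moreover have "e = {m, \<psi> x}" using e0 x unfolding \<phi>_def by auto
        ultimately show ?thesis unfolding G'_def S_def by auto
      qed
      qed
    qed
  qed
  moreover have "C \<notin> copies XX G"
  proof
    assume "C \<in> copies XX G"
    then have "verts C \<subseteq> {0..<m}" using VG unfolding copies_def subgraph_def by auto
    moreover have "m \<in> verts C" using a unfolding C_def img_def \<phi>_def by force
    ultimately show False by auto
  qed
  moreover have "copies XX G \<subseteq> copies XX G'"
    by (rule copies_mono) (use VG in \<open>auto simp: G'_def\<close>)
  ultimately have "copies XX G \<subset> copies XX G'" by blast
  then have "card (copies XX G) < card (copies XX G')"
    by (rule psubset_card_mono[OF copies_finite[OF wG']])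
  then show ?thesis using wG' free' by (intro exI[of _ G']) (auto simp: G'_def)
qed

lemma wf_edge_pair: "sgraph_wf X \<Longrightarrow> {u, v} \<in> edges X \<Longrightarrow> u \<noteq> v \<and> u \<in> verts X \<and> v \<in> verts X"
  using wf_edge[of X "{u, v}"] by (auto simp: doubleton_eq_iff)

lemma chi_le:
  assumes "\<forall>v\<in>verts G. c v < k" "\<forall>u v. {u, v} \<in> edges G \<longrightarrow> c u \<noteq> c v"
  shows "chi G \<le> k"
  unfolding chi_def by (rule Least_le) (use assms in blast)

lemma chi_ex:
  assumes w: "sgraph_wf X"
  shows "\<exists>c. (\<forall>v\<in>verts X. c v < chi X) \<and> (\<forall>u v. {u, v} \<in> edges X \<longrightarrow> c u \<noteq> c v)"
proof -
  have "finite (verts X)" using w unfolding sgraph_wf_def by auto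
  then obtain ix where ix: "bij_betw ix (verts X) {0..<card (verts X)}" using ex_bij_betw_finite_nat by blast
  have "\<exists>c :: 'a \<Rightarrow> nat. (\<forall>v\<in>verts X. c v < card (verts X)) \<and> (\<forall>u v. {u, v} \<in> edges X \<longrightarrow> c u \<noteq> c v)"
  proof (intro exI[of _ ix] conjI allI impI ballI)
    fix v assume "v \<in> verts X" then show "ix v < card (verts X)" using ix unfolding bij_betw_def by auto
  next
    fix u v assume "{u, v} \<in> edges X"
    then have "u \<noteq> v" "u \<in> verts X" "v \<in> verts X" using wf_edge_pair[OF w] by auto
    then show "ix u \<noteq> ix v" using ix unfolding bij_betw_def inj_on_def by auto
  qed
  then have "\<exists>k. \<exists>c :: 'a \<Rightarrow> nat. (\<forall>v\<in>verts X. c v < k) \<and> (\<forall>u v. {u, v} \<in> edges X \<longrightarrow> c u \<noteq> c v)"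
    by blast
  from LeastI_ex[OF this] show ?thesis unfolding chi_def .
qed

lemma blowup:
  fixes X :: "'a sgraph" and FF :: "'b sgraph set"
  assumes wX: "sgraph_wf X" and ne: "verts X \<noteq> {}" and chiF: "\<forall>F'\<in>FF. chi X < chi F'"
    and hk: "card (verts X) * k \<le> m"
  shows "\<exists>G::nat sgraph. verts G = {0..<m} \<and> sgraph_wf G \<and> \<not> contains G FF \<and>
           k ^ card (verts X) \<le> card (copies {X} G)"
proof -
  define h where "h = card (verts X)"
  have finX: "finite (verts X)" using wX unfolding sgraph_wf_def by auto
  obtain ix where ix: "bij_betw ix (verts X) {0..<h}" unfolding h_def using ex_bij_betw_finite_nat finX by blast
  define own where "own = (\<lambda>p::nat. inv_into (verts X) ix (p div k))"
  have own: "own p \<in> verts X \<and> ix (own p) = p div k" if "p < h * k" for p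
  proof -
    have "p div k < h" using that by (simp add: less_mult_imp_div_less)
    then have "p div k \<in> ix ` verts X" using ix unfolding bij_betw_def by auto
    then show ?thesis unfolding own_def by (simp add: inv_into_into f_inv_into_f)
  qed
  define E where "E = {{p, q} | p q. p < h * k \<and> q < h * k \<and> {own p, own q} \<in> edges X}"
  define G :: "nat sgraph" where "G = ({0..<m}, E)"
  have wG: "sgraph_wf G"
    unfolding sgraph_wf_def G_def fst_conv snd_conv
  proof (intro conjI ballI)
    show "finite {0..<m}" by simp
    fix e assume "e \<in> E"
    then obtain p q where pq: "e = {p, q}" "p < h * k" "q < h * k" "{own p, own q} \<in> edges X"
      unfolding E_def by blast
    then have "own p \<noteq> own q" using wf_edge_pair[OF wX] by blast
    then have "p \<noteq> q" by blast
    moreover have hkm: "h * k \<le> m" using hk unfolding h_def .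
    then have "p < m" "q < m" using pq(2,3) by linarith+
    ultimately show "\<exists>u v. u \<noteq> v \<and> u \<in> {0..<m} \<and> v \<in> {0..<m} \<and> e = {u, v}"
      using pq by (intro exI[of _ p] exI[of _ q]) auto
  qed
  obtain c where c: "\<forall>v\<in>verts X. c v < chi X" "\<forall>u v. {u, v} \<in> edges X \<longrightarrow> c u \<noteq> c v"
    using chi_ex[OF wX] by blast
  obtain x0 where x0: "x0 \<in> verts X" using ne by auto
  define col where "col = (\<lambda>p. if p < h * k then c (own p) else c x0)"
  have col_lt: "col p < chi X" for p unfolding col_def using c(1) own x0 by auto
  have col_ne: "col p \<noteq> col q" if "{p, q} \<in> E" for p q
  proof -
    have "\<exists>p' q'. {p, q} = {p', q'} \<and> p' < h * k \<and> q' < h * k \<and> {own p', own q'} \<in> edges X"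
      using that unfolding E_def by (simp only: mem_Collect_eq)
    then obtain p' q' where pq: "{p, q} = {p', q'}" "p' < h * k" "q' < h * k" "{own p', own q'} \<in> edges X"
      by (elim exE conjE)
    have "c (own p') \<noteq> c (own q')" using c(2)[rule_format, OF pq(4)] .
    moreover have "{own q', own p'} \<in> edges X" using pq(4) by (simp add: insert_commute)
    then have "c (own q') \<noteq> c (own p')" using c(2)[rule_format] by blast
    ultimately show ?thesis using pq(1-3) unfolding col_def by (auto simp: doubleton_eq_iff)
  qed
  have free: "\<not> contains G FF"
  proof
    assume "contains G FF"
    then obtain S F' where sub: "subgraph S G" and F': "F' \<in> FF" and iso: "iso F' S"
      unfolding contains_def copies_def by blast
    obtain g where g: "bij_betw g (verts F') (verts S)" "(\<lambda>e. g ` e) ` edges F' = edges S"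
      using iso unfolding iso_def by blast
    have "chi F' \<le> chi X"
    proof (rule chi_le[of F' "col \<circ> g"])
      show "\<forall>v\<in>verts F'. (col \<circ> g) v < chi X" using col_lt by simp
      show "\<forall>u v. {u, v} \<in> edges F' \<longrightarrow> (col \<circ> g) u \<noteq> (col \<circ> g) v"
      proof (intro allI impI)
        fix u v assume "{u, v} \<in> edges F'"
        then have "g ` {u, v} \<in> edges S" using g(2) by blast
        then have "{g u, g v} \<in> E" using sub unfolding subgraph_def G_def by auto
        then show "(col \<circ> g) u \<noteq> (col \<circ> g) v" using col_ne by simp
      qed
    qed
    then show False using chiF F' by force
  qed
  have cnt: "k ^ h \<le> card (copies {X} G)"
  proof (cases "k = 0")
    case True
    moreover have "h > 0" using ne finX unfolding h_def by (simp add: card_gt_0_iff)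
    ultimately show ?thesis by (simp add: zero_power)
  next
    case False
    then have kpos: "k > 0" by simp
    define B where "B = (\<lambda>x. {ix x * k ..< ix x * k + k})"
    define P where "P = (\<Pi>\<^sub>E x\<in>verts X. B x)"
    have ixlt: "ix x < h" if "x \<in> verts X" for x using ix that unfolding bij_betw_def by auto
    have gdiv: "g x div k = ix x \<and> g x < h * k" if "g \<in> P" "x \<in> verts X" for g x
    proof -
      have b: "ix x * k \<le> g x" "g x < ix x * k + k" using that unfolding P_def B_def by auto
      have "g x div k = ix x" by (rule div_nat_eqI) (use b in \<open>auto simp: mult.commute\<close>)
      moreover have "ix x * k + k \<le> h * k"
      proof -
        have "Suc (ix x) \<le> h" using ixlt[OF that(2)] by simp
        then have "Suc (ix x) * k \<le> h * k" by (rule mult_le_mono1)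
        then show ?thesis by simp
      qed
      ultimately show ?thesis using b by simp
    qed
    have ginj: "inj_on g (verts X)" if "g \<in> P" for g
    proof (rule inj_onI)
      fix x y assume "x \<in> verts X" "y \<in> verts X" "g x = g y"
      then have "ix x = ix y" using gdiv[OF that] by metis
      then show "x = y" using ix \<open>x \<in> verts X\<close> \<open>y \<in> verts X\<close> unfolding bij_betw_def inj_on_def by blast
    qed
    have gown: "own (g x) = x" if "g \<in> P" "x \<in> verts X" for g x
    proof -
      have "ix (own (g x)) = ix x" "own (g x) \<in> verts X" using own[of "g x"] gdiv[OF that] by auto
      then show ?thesis using ix that(2) unfolding bij_betw_def inj_on_def by blast
    qed
    have into: "(\<lambda>g. img g X) ` P \<subseteq> copies {X} G"
    proof
      fix C assume "C \<in> (\<lambda>g. img g X) ` P"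
      then obtain g where gP: "g \<in> P" and C: "C = img g X" by auto
      show "C \<in> copies {X} G"
        unfolding copies_def
      proof (intro CollectI conjI bexI[OF _ singletonI])
        show "iso X C" unfolding C by (rule iso_img0[OF ginj[OF gP]])
        show "subgraph C G"
          unfolding subgraph_def C img_def fst_conv snd_conv
        proof (intro conjI)
          show "g ` verts X \<subseteq> verts G"
          proof
            fix p assume "p \<in> g ` verts X"
            then obtain x where "x \<in> verts X" "p = g x" by auto
            then show "p \<in> verts G" using gdiv[OF gP] hk unfolding G_def h_def by fastforce
          qed
          show "\<forall>e\<in>(\<lambda>e. g ` e) ` edges X. e \<subseteq> g ` verts X"
            using wf_edge_sub[OF wX] by auto
          show "(\<lambda>e. g ` e) ` edges X \<subseteq> edges G"
          proof
            fix e assume "e \<in> (\<lambda>e. g ` e) ` edges X"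
            then obtain e0 where e0: "e0 \<in> edges X" "e = g ` e0" by auto
            obtain u v where uv: "u \<noteq> v" "u \<in> verts X" "v \<in> verts X" "e0 = {u, v}"
              using wf_edge[OF wX e0(1)] by blast
            have "{own (g u), own (g v)} \<in> edges X" using gown[OF gP] uv e0 by simp
            moreover have "g u < h * k" "g v < h * k" using gdiv[OF gP] uv by auto
            ultimately have "{g u, g v} \<in> E" unfolding E_def by blast
            then show "e \<in> edges G" using e0 uv unfolding G_def by simp
          qed
        qed
      qed
    qed
    have injP: "inj_on (\<lambda>g. img g X) P"
    proof (rule inj_onI)
      fix g1 g2 assume g12: "g1 \<in> P" "g2 \<in> P" "img g1 X = img g2 X"
      then have im: "g1 ` verts X = g2 ` verts X" unfolding img_def by simp
      show "g1 = g2"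
      proof
        fix x show "g1 x = g2 x"
        proof (cases "x \<in> verts X")
          case False then show ?thesis using g12 unfolding P_def PiE_def extensional_def by auto
        next
          case True
          then obtain y where y: "y \<in> verts X" "g1 x = g2 y" using im by (metis image_iff image_eqI)
          have "x = y" using gown[OF g12(1) True] gown[OF g12(2) y(1)] y(2) by simp
          then show ?thesis using y by simp
        qed
      qed
    qed
    have "card P = k ^ h"
      unfolding P_def B_def h_def using finX by (simp add: card_PiE)
    then have "k ^ h = card ((\<lambda>g. img g X) ` P)" using injP by (simp add: card_image)
    also have "\<dots> \<le> card (copies {X} G)" by (rule card_mono[OF copies_finite[OF wG] into])
    finally show ?thesis .
  qed
  show ?thesis using wG free cnt unfolding h_def by (intro exI[of _ G]) (auto simp: G_def)
qed


lemma arith_big: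
  fixes C d :: nat
  assumes d: "d \<ge> 1"
  shows "\<exists>M. \<forall>m\<ge>M. C * m ^ (d - 1) < (m div d) ^ d"
proof -
  define D where "D = C * (2 * d) ^ (d - 1) + 1"
  have "\<forall>m\<ge>d * D. C * m ^ (d - 1) < (m div d) ^ d"
  proof (intro allI impI)
    fix m assume m: "d * D \<le> m"
    define q where "q = m div d"
    have qD: "D \<le> q"
    proof -
      have "(d * D) div d \<le> m div d" using m by (rule div_le_mono)
      then show ?thesis using d unfolding q_def by simp
    qed
    then have q1: "q \<ge> 1" unfolding D_def by simp
    have "m < d * (q + 1)"
    proof -
      have "m = d * q + m mod d" unfolding q_def by simp
      moreover have "m mod d < d" using d by simp
      ultimately show ?thesis by simp
    qed
    also have "\<dots> \<le> 2 * d * q" using q1 by simp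
    finally have m2: "m \<le> 2 * d * q" by simp
    have "C * m ^ (d - 1) \<le> C * (2 * d * q) ^ (d - 1)"
      using m2 by (intro mult_le_mono2 power_mono) auto
    also have "\<dots> = C * (2 * d) ^ (d - 1) * q ^ (d - 1)" by (simp add: power_mult_distrib)
    also have "\<dots> < D * q ^ (d - 1)"
    proof -
      have "q ^ (d - 1) \<ge> 1" using q1 by simp
      then show ?thesis unfolding D_def using q1 by (simp add: algebra_simps)
    qed
    also have "\<dots> \<le> q * q ^ (d - 1)" using qD by simp
    also have "\<dots> = q ^ d" using d by (metis Suc_diff_le diff_Suc_1 power_Suc)
    finally show "C * m ^ (d - 1) < (m div d) ^ d" unfolding q_def .
  qed
  then show ?thesis by blast
qed

definition exset :: "nat \<Rightarrow> 'a sgraph set \<Rightarrow> 'b sgraph set \<Rightarrow> nat set" where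
  "exset n A B = {card (copies A G) | G :: nat sgraph.
       verts G = {0..<n} \<and> sgraph_wf G \<and> \<not> contains G B}"

lemma ex_exset: "ex n A B = Max (exset n A B)"
  unfolding ex_def exset_def by simp

lemma exset_finite: "finite (exset n A B)"
proof -
  have "{G :: nat sgraph. verts G = {0..<n} \<and> sgraph_wf G \<and> \<not> contains G B} \<subseteq> {{0..<n}} \<times> Pow (Pow {0..<n})"
    using wf_edge_sub by fastforce
  then have "finite {G :: nat sgraph. verts G = {0..<n} \<and> sgraph_wf G \<and> \<not> contains G B}"
    by (rule finite_subset) simp
  then have "finite ((\<lambda>G. card (copies A G)) ` {G :: nat sgraph. verts G = {0..<n} \<and> sgraph_wf G \<and> \<not> contains G B})"
    by simp
  moreover have "exset n A B = (\<lambda>G. card (copies A G)) ` {G :: nat sgraph. verts G = {0..<n} \<and> sgraph_wf G \<and> \<not> contains G B}"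
    unfolding exset_def by blast
  ultimately show ?thesis by simp
qed

lemma main_gen:
  fixes XX :: "'a sgraph set" and FF :: "'b sgraph set" and Xs :: "'a sgraph"
  assumes finXX: "finite XX" and wXX: "\<forall>X\<in>XX. sgraph_wf X"
    and Xs: "Xs \<in> XX" and ne0: "verts Xs \<noteq> {}" and chi0: "\<forall>F'\<in>FF. chi Xs < chi F'"
    and fF: "\<forall>F'\<in>FF. card (verts F') \<le> f"
    and badb: "\<And>m G. verts G = {0..<m} \<Longrightarrow> sgraph_wf G \<Longrightarrow> m \<ge> 1 \<Longrightarrow> \<not> good XX f G \<Longrightarrow>
                  card (copies XX G) \<le> C * m ^ (card (verts Xs) - 1)"
  shows "\<exists>N. \<forall>n\<ge>N. ex n XX FF > ex (n - 1) XX FF"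
proof -
  define d where "d = card (verts Xs)"
  have wXs: "sgraph_wf Xs" using Xs wXX by auto
  have d1: "d \<ge> 1" using ne0 wXs unfolding d_def sgraph_wf_def by (simp add: Suc_le_eq card_gt_0_iff)
  obtain M where M: "\<forall>m\<ge>M. C * m ^ (d - 1) < (m div d) ^ d" using arith_big[OF d1] by blast
  have "\<forall>n\<ge>M + 2. ex n XX FF > ex (n - 1) XX FF"
  proof (intro allI impI)
    fix n assume n: "M + 2 \<le> n"
    define m where "m = n - 1"
    have nm: "n = Suc m" and m1: "m \<ge> 1" and mM: "m \<ge> M" using n unfolding m_def by auto
    define k where "k = m div d"
    have "d * k \<le> m" unfolding k_def by simp
    then obtain G1 :: "nat sgraph" where G1: "verts G1 = {0..<m}" "sgraph_wf G1" "\<not> contains G1 FF"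
       "k ^ d \<le> card (copies {Xs} G1)"
      using blowup[OF wXs ne0 chi0, of k m] unfolding d_def by blast
    have "copies {Xs} G1 \<subseteq> copies XX G1" using Xs unfolding copies_def by blast
    then have "card (copies {Xs} G1) \<le> card (copies XX G1)"
      by (rule card_mono[OF copies_finite[OF G1(2)]])
    moreover have "card (copies XX G1) \<in> exset m XX FF" unfolding exset_def using G1 by blast
    ultimately have lowb: "k ^ d \<le> ex m XX FF"
      using G1(4) unfolding ex_exset by (meson Max_ge exset_finite le_trans)
    have "exset m XX FF \<noteq> {}" using \<open>card (copies XX G1) \<in> exset m XX FF\<close> by blast
    then have "ex m XX FF \<in> exset m XX FF" unfolding ex_exset by (rule Max_in[OF exset_finite])
    then obtain G0 :: "nat sgraph" where G0: "verts G0 = {0..<m}" "sgraph_wf G0" "\<not> contains G0 FF"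
      "ex m XX FF = card (copies XX G0)"
      unfolding exset_def by blast
    show "ex n XX FF > ex (n - 1) XX FF"
    proof (cases "good XX f G0")
      case True
      obtain G' where G': "verts G' = {0..<Suc m}" "sgraph_wf G'" "\<not> contains G' FF"
        "card (copies XX G') > card (copies XX G0)"
        using ext_step[OF G0(1-3) fF wXX True] by blast
      have "card (copies XX G') \<in> exset (Suc m) XX FF" unfolding exset_def using G' by blast
      then have "card (copies XX G') \<le> ex (Suc m) XX FF" unfolding ex_exset by (rule Max_ge[OF exset_finite])
      then show ?thesis using G'(4) G0(4) nm by simp
    next
      case False
      have "ex m XX FF \<le> C * m ^ (d - 1)" using badb[OF G0(1,2) m1 False] G0(4) unfolding d_def by simp
      also have "\<dots> < k ^ d" using M mM unfolding k_def by blast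
      finally show ?thesis using lowb by simp
    qed
  qed
  then show ?thesis by blast
qed


lemma single_bound:
  fixes Y :: "'a sgraph" and G :: "nat sgraph"
  assumes wY: "sgraph_wf Y" and wG: "sgraph_wf G" and VG: "verts G = {0..<m}" and b: "b \<in> verts Y"
    and bad: "\<forall>\<psi>\<in>emb (delete_set Y {b}) G. card (CN G (\<psi> ` nbr Y b)) < f"
  shows "card (emb Y G) \<le> f * m ^ (card (verts Y) - 1)"
proof -
  have finY: "finite (verts Y)" using wY unfolding sgraph_wf_def by auto
  have ind: "indep Y {b}"
    unfolding indep_def
  proof (intro conjI ballI)
    show "{b} \<subseteq> verts Y" using b by simp
    fix e assume "e \<in> edges Y"
    then obtain u v where "u \<noteq> v" "e = {u, v}" using wf_edge[OF wY] by blast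
    then show "\<not> e \<subseteq> {b}" by auto
  qed
  have "card (emb Y G) \<le> f ^ card {b} * card (emb (delete_set Y {b}) G)"
    by (rule emb_bound[OF wY wG ind]) (use bad in simp)
  also have "\<dots> = f * card (emb (delete_set Y {b}) G)" by simp
  also have "card (emb (delete_set Y {b}) G) \<le> card (verts G) ^ card (verts (delete_set Y {b}))"
    by (rule card_emb_le) (use finY VG in \<open>auto simp: delete_set_def\<close>)
  also have "\<dots> = m ^ (card (verts Y) - 1)" using VG b finY by (simp add: delete_set_def)
  finally show ?thesis by simp
qed

lemma part1_bad:
  fixes H :: "'a sgraph" and G :: "nat sgraph"
  assumes wH: "sgraph_wf H" and wG: "sgraph_wf G" and VG: "verts G = {0..<m}" and ne: "verts H \<noteq> {}"
    and bad: "\<not> good {H} f G"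
  shows "card (copies {H} G) \<le> f * m ^ (card (verts H) - 1)"
proof -
  obtain b where b: "b \<in> verts H" using ne by auto
  have "card (copies {H} G) \<le> card (emb H G)" by (rule card_copies_single[OF wH wG])
  also have "\<dots> \<le> f * m ^ (card (verts H) - 1)"
    by (rule single_bound[OF wH wG VG b]) (use bad b in \<open>auto simp: good_def not_le\<close>)
  finally show ?thesis .
qed

lemma Hfam_finite: "finite (verts H) \<Longrightarrow> finite (Hfam H)"
proof -
  assume "finite (verts H)"
  moreover have "Hfam H \<subseteq> (\<lambda>I. delete_set H I) ` Pow (verts H)"
    unfolding Hfam_def indep_def by auto
  ultimately show ?thesis by (meson finite_Pow_iff finite_imageI finite_subset)
qed

lemma Hfam_wf: "sgraph_wf H \<Longrightarrow> X \<in> Hfam H \<Longrightarrow> sgraph_wf X"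
  unfolding Hfam_def using delete_set_wf by blast

lemma delete_twice: "delete_set (delete_set H I) J = delete_set H (I \<union> J)"
  unfolding delete_set_def by auto

lemma member_bound:
  fixes H :: "'a sgraph" and G :: "nat sgraph"
  assumes wH: "sgraph_wf H" and I0: "indep H I0" and cI0: "card I0 = alpha H" and I0ne: "I0 \<noteq> verts H"
    and VG: "verts G = {0..<m}" and wG: "sgraph_wf G" and m1: "m \<ge> 1" and f1: "f \<ge> 1"
    and bad: "\<not> good (Hfam H) f G"
    and X: "X \<in> Hfam H"
  shows "card (emb X G) \<le> f ^ card (verts H) * f * m ^ (card (verts H - I0) - 1)"
proof -
  define d where "d = card (verts H - I0)"
  have finH: "finite (verts H)" using wH unfolding sgraph_wf_def by auto
  have badX: "\<And>Y a \<psi>. Y \<in> Hfam H \<Longrightarrow> a \<in> verts Y \<Longrightarrow> \<psi> \<in> emb (delete_set Y {a}) G \<Longrightarrow>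
      card (CN G (\<psi> ` nbr Y a)) < f"
    using bad unfolding good_def by (meson not_le)
  obtain I where I: "indep H I" "I \<noteq> verts H" "X = delete_set H I" using X unfolding Hfam_def by blast
  have I0V: "I0 \<subseteq> verts H" using I0 unfolding indep_def by auto
  define Is where "Is = (if \<exists>J. indep H J \<and> card J = alpha H \<and> I \<subseteq> J
                         then (SOME J. indep H J \<and> card J = alpha H \<and> I \<subseteq> J) else I0)"
  have Is: "indep H Is" "card Is = alpha H"
  proof -
    have "indep H Is \<and> card Is = alpha H"
    proof (cases "\<exists>J. indep H J \<and> card J = alpha H \<and> I \<subseteq> J")
      case True
      then show ?thesis unfolding Is_def using someI_ex[OF True] by simp
    next
      case False then show ?thesis unfolding Is_def if_not_P[OF False] using I0 cI0 by simp
    qed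
    then show "indep H Is" "card Is = alpha H" by auto
  qed
  have IsV: "Is \<subseteq> verts H" using Is(1) unfolding indep_def by auto
  have Isne: "Is \<noteq> verts H"
  proof
    assume "Is = verts H"
    then have "card I0 = card (verts H)" using Is(2) cI0 by simp
    then have "I0 = verts H" using I0V finH by (simp add: card_subset_eq)
    then show False using I0ne by simp
  qed
  have cIs: "card (verts H - Is) = d"
  proof -
    have "card (verts H - Is) = card (verts H) - card Is" using IsV finH by (simp add: card_Diff_subset finite_subset)
    also have "\<dots> = card (verts H) - card I0" using Is(2) cI0 by simp
    also have "\<dots> = d" unfolding d_def using I0V finH by (simp add: card_Diff_subset finite_subset)
    finally show ?thesis .
  qed
  define T where "T = Is - I"
  have wX: "sgraph_wf X" using I(3) delete_set_wf[OF wH] by simp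
  have indT: "indep X T"
    using Is(1) unfolding indep_def I(3) T_def delete_set_def by auto
  have b1: "card (emb X G) \<le> f ^ card T * card (emb (delete_set X T) G)"
  proof (rule emb_bound[OF wX wG indT])
    show "\<forall>t\<in>T. \<forall>\<psi>\<in>emb (delete_set X {t}) G. card (CN G (\<psi> ` nbr X t)) < f"
      using badX[OF X] indT unfolding indep_def by blast
  qed
  have fT: "f ^ card T \<le> f ^ card (verts H)"
  proof (rule power_increasing[OF _ f1])
    show "card T \<le> card (verts H)" using IsV finH unfolding T_def by (intro card_mono) auto
  qed
  have b2: "card (emb (delete_set X T) G) \<le> f * m ^ (d - 1)"
  proof (cases "\<exists>J. indep H J \<and> card J = alpha H \<and> I \<subseteq> J")
    case True
    then have IIs: "I \<subseteq> Is" unfolding Is_def using someI_ex[OF True] by simp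
    have eq: "delete_set X T = delete_set H Is"
      unfolding I(3) delete_twice T_def using IIs by (simp add: Un_absorb1)
    have Ymem: "delete_set H Is \<in> Hfam H" unfolding Hfam_def using Is(1) Isne by blast
    have wY: "sgraph_wf (delete_set H Is)" by (rule delete_set_wf[OF wH])
    obtain b where b: "b \<in> verts H - Is" using IsV Isne by blast
    then have bY: "b \<in> verts (delete_set H Is)" unfolding delete_set_def by simp
    have "card (emb (delete_set H Is) G) \<le> f * m ^ (card (verts (delete_set H Is)) - 1)"
      by (rule single_bound[OF wY wG VG bY]) (use badX[OF Ymem bY] in blast)
    then show ?thesis unfolding eq using cIs by (simp add: delete_set_def)
  next
    case False
    then have nsub: "\<not> I \<subseteq> I0" using I0 cI0 by blast
    have TIs: "Is = I0" unfolding Is_def if_not_P[OF False] ..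
    have vv: "verts (delete_set X T) = verts H - (I \<union> I0)"
      unfolding I(3) delete_twice T_def TIs by (auto simp: delete_set_def)
    have lt: "card (verts H - (I \<union> I0)) < d"
    proof -
      obtain x where x: "x \<in> I" "x \<notin> I0" using nsub by blast
      have "x \<in> verts H" using x I(1) unfolding indep_def by auto
      then have "verts H - (I \<union> I0) \<subset> verts H - I0" using x by blast
      then show ?thesis unfolding d_def using finH by (intro psubset_card_mono) auto
    qed
    have "card (emb (delete_set X T) G) \<le> card (verts G) ^ card (verts (delete_set X T))"
      by (rule card_emb_le) (use finH VG vv in auto)
    also have "\<dots> = m ^ card (verts H - (I \<union> I0))" using VG vv by simp
    also have "\<dots> \<le> m ^ (d - 1)" using lt m1 by (intro power_increasing) auto
    also have "\<dots> \<le> f * m ^ (d - 1)" using f1 by simp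
    finally show ?thesis .
  qed
  have "card (emb X G) \<le> f ^ card T * (f * m ^ (d - 1))"
    using b1 b2 by (meson le_trans mult_le_mono2)
  also have "\<dots> \<le> f ^ card (verts H) * (f * m ^ (d - 1))" using fT by (rule mult_le_mono1)
  finally show ?thesis unfolding d_def by (simp add: mult.assoc)
qed

lemma part2_bad:
  fixes H :: "'a sgraph" and G :: "nat sgraph"
  assumes wH: "sgraph_wf H" and I0: "indep H I0" and cI0: "card I0 = alpha H" and I0ne: "I0 \<noteq> verts H"
    and VG: "verts G = {0..<m}" and wG: "sgraph_wf G" and m1: "m \<ge> 1" and f1: "f \<ge> 1"
    and bad: "\<not> good (Hfam H) f G"
  shows "card (copies (Hfam H) G) \<le> (card (Hfam H) * (f ^ card (verts H) * f)) * m ^ (card (verts H - I0) - 1)"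
proof -
  have finH: "finite (verts H)" using wH unfolding sgraph_wf_def by auto
  have "card (copies (Hfam H) G) \<le> (\<Sum>X\<in>Hfam H. card (emb X G))"
    by (rule card_copies_le[OF Hfam_finite[OF finH] _ wG]) (use Hfam_wf[OF wH] in blast)
  also have "\<dots> \<le> (\<Sum>X\<in>Hfam H. f ^ card (verts H) * f * m ^ (card (verts H - I0) - 1))"
    by (rule sum_mono) (rule member_bound[OF wH I0 cI0 I0ne VG wG m1 f1 bad])
  also have "\<dots> = (card (Hfam H) * (f ^ card (verts H) * f)) * m ^ (card (verts H - I0) - 1)"
    by (simp add: mult.assoc)
  finally show ?thesis .
qed


lemma chi_fam_attained:
  assumes "A \<noteq> {}"
  shows "\<exists>X\<in>A. chi_fam A = enat (chi X)"
proof -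
  define S where "S = (\<lambda>G. enat (chi G)) ` A"
  have ne: "S \<noteq> {}" using assms unfolding S_def by blast
  have eq: "chi_fam A = Inf S" unfolding chi_fam_def S_def ..
  have eq2: "Inf S = (LEAST x. x \<in> S)" unfolding Inf_enat_def if_not_P[OF ne] ..
  obtain y where "y \<in> S" using ne by blast
  then have "(LEAST x. x \<in> S) \<in> S" by (rule LeastI)
  then obtain X where "X \<in> A" "(LEAST x. x \<in> S) = enat (chi X)" unfolding S_def by blast
  then show ?thesis using eq eq2 by metis
qed

lemma chi_fam_empty: "chi_fam {} = \<infinity>"
  unfolding chi_fam_def by (simp add: top_enat_def)

lemma chi_fam_lower: "X \<in> A \<Longrightarrow> chi_fam A \<le> enat (chi X)"
  unfolding chi_fam_def by (rule INF_lower)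

theorem proposition9:
  fixes H :: "'a sgraph" and F :: "'b sgraph"
  assumes "graph H" and "graph F"
  shows "(chi H < chi F \<longrightarrow>
            (\<exists>N. \<forall>n\<ge>N. ex n {H} {F} > ex (n - 1) {H} {F}))
       \<and> (chi_fam (Hstar H) < chi_fam (Hfam F) \<longrightarrow>
            (\<exists>N. \<forall>n\<ge>N. ex n (Hfam H) (Hfam F) > ex (n - 1) (Hfam H) (Hfam F)))"
proof (intro conjI impI)
  have wH: "sgraph_wf H" and neH: "verts H \<noteq> {}" using assms(1) unfolding graph_def by auto
  have wF: "sgraph_wf F" and neF: "verts F \<noteq> {}" using assms(2) unfolding graph_def by auto
  have finH: "finite (verts H)" and finF: "finite (verts F)" using wH wF unfolding sgraph_wf_def by auto
  define f where "f = card (verts F)"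
  have f1: "f \<ge> 1" unfolding f_def using neF finF by (simp add: Suc_le_eq card_gt_0_iff)
  {
    assume chi: "chi H < chi F"
    show "\<exists>N. \<forall>n\<ge>N. ex n {H} {F} > ex (n - 1) {H} {F}"
    proof (rule main_gen[where Xs = H and f = f and C = f])
      show "finite {H}" by simp
      show "\<forall>X\<in>{H}. sgraph_wf X" using wH by simp
      show "H \<in> {H}" by simp
      show "verts H \<noteq> {}" by (rule neH)
      show "\<forall>F'\<in>{F}. chi H < chi F'" using chi by simp
      show "\<forall>F'\<in>{F}. card (verts F') \<le> f" unfolding f_def by simp
      fix m and G :: "nat sgraph"
      assume "verts G = {0..<m}" "sgraph_wf G" "1 \<le> m" "\<not> good {H} f G"
      then show "card (copies {H} G) \<le> f * m ^ (card (verts H) - 1)"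
        by (intro part1_bad[OF wH _ _ neH])
    qed
  }
  {
    assume hyp: "chi_fam (Hstar H) < chi_fam (Hfam F)"
    have "Hstar H \<noteq> {}"
    proof
      assume "Hstar H = {}"
      then have "chi_fam (Hstar H) = \<infinity>" using chi_fam_empty by metis
      then show False using hyp by simp
    qed
    then obtain X0 where X0: "X0 \<in> Hstar H" "chi_fam (Hstar H) = enat (chi X0)"
      using chi_fam_attained by blast
    then obtain I0 where I0: "indep H I0" "card I0 = alpha H" "I0 \<noteq> verts H" "X0 = delete_set H I0"
      unfolding Hstar_def by blast
    have chi0: "\<forall>F'\<in>Hfam F. chi X0 < chi F'"
    proof
      fix F' assume "F' \<in> Hfam F"
      then have "chi_fam (Hfam F) \<le> enat (chi F')" by (rule chi_fam_lower)
      moreover have "enat (chi X0) < chi_fam (Hfam F)" using hyp X0(2) by simp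
      ultimately have "enat (chi X0) < enat (chi F')" by (rule less_le_trans[rotated])
      then show "chi X0 < chi F'" by simp
    qed
    have I0V: "I0 \<subseteq> verts H" using I0(1) unfolding indep_def by auto
    have vX0: "verts X0 = verts H - I0" using I0(4) unfolding delete_set_def by simp
    show "\<exists>N. \<forall>n\<ge>N. ex n (Hfam H) (Hfam F) > ex (n - 1) (Hfam H) (Hfam F)"
    proof (rule main_gen[where Xs = X0 and f = f and C = "card (Hfam H) * (f ^ card (verts H) * f)"])
      show "finite (Hfam H)" by (rule Hfam_finite[OF finH])
      show "\<forall>X\<in>Hfam H. sgraph_wf X" using Hfam_wf[OF wH] by blast
      show "X0 \<in> Hfam H" using X0(1) unfolding Hstar_def Hfam_def by blast
      show "verts X0 \<noteq> {}"
      proof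
        assume "verts X0 = {}"
        then have "verts H \<subseteq> I0" using vX0 by auto
        then show False using I0V I0(3) by auto
      qed
      show "\<forall>F'\<in>Hfam F. chi X0 < chi F'" by (rule chi0)
      show "\<forall>F'\<in>Hfam F. card (verts F') \<le> f"
      proof
        fix F' assume "F' \<in> Hfam F"
        then obtain J where "F' = delete_set F J" unfolding Hfam_def by blast
        then have "verts F' \<subseteq> verts F" unfolding delete_set_def by auto
        then show "card (verts F') \<le> f" unfolding f_def using finF by (rule card_mono[rotated])
      qed
      fix m and G :: "nat sgraph"
      assume G: "verts G = {0..<m}" "sgraph_wf G" "1 \<le> m" "\<not> good (Hfam H) f G"
      show "card (copies (Hfam H) G) \<le> card (Hfam H) * (f ^ card (verts H) * f) * m ^ (card (verts X0) - 1)"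
        unfolding vX0 by (rule part2_bad[OF wH I0(1-3) G(1,2,3) f1 G(4)])
    qed
  }
qed

end
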